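(* Let $G$ be a finite simple complete bipartite graph $K_{m,n}$ with $m,n\ge 1$. If $G$ has a set graceful labeling (with respect to some finite set $X$), then $G$ is a star, i.e., $m=1$ or $n=1$.
   Context: All graphs are finite and simple. Let $G$ be a graph with vertex set $V$ and edge set $E$, let $X$ be a set and $\mathcal{P}(X)$ its power set. For a function $f:V\to\mathcal{P}(X)$ define $\hat f:E\to\mathcal{P}(X)$ by $\hat f(xy)=f(x)\,\Delta\, f(y)$, where $A\Delta B$ denotes the symmetric difference of sets $A$ and $B$. The function $f$ is a set graceful labeling of $G$ if both $f$ and $\hat f$ are injective and the range of $\hat f$ is exactly $\mathcal{P}(X)\setminus\{\emptyset\}$. *)

theory Defs
  imports Main
begin

definition simple_graph :: "'v set \<Rightarrow> 'v set set \<Rightarrow> bool" where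
  "simple_graph V E \<longleftrightarrow> finite V \<and> (\<forall>e\<in>E. \<exists>x y. x \<in> V \<and> y \<in> V \<and> x \<noteq> y \<and> e = {x, y})"

definition sym_diff :: "'a set \<Rightarrow> 'a set \<Rightarrow> 'a set" where
  "sym_diff A B = (A - B) \<union> (B - A)"

definition edge_label :: "('v \<Rightarrow> 'a set) \<Rightarrow> 'v set \<Rightarrow> 'a set" where
  "edge_label f e = (THE S. \<exists>x y. e = {x, y} \<and> S = sym_diff (f x) (f y))"

definition set_graceful :: "'v set \<Rightarrow> 'v set set \<Rightarrow> 'a set \<Rightarrow> ('v \<Rightarrow> 'a set) \<Rightarrow> bool" where
  "set_graceful V E X f \<longleftrightarrow>
     (\<forall>v\<in>V. f v \<subseteq> X) \<and> inj_on f V \<and> inj_on (edge_label f) E \<and>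
     edge_label f ` E = Pow X - {{}}"

definition complete_bipartite :: "'v set \<Rightarrow> 'v set set \<Rightarrow> nat \<Rightarrow> nat \<Rightarrow> bool" where
  "complete_bipartite V E m n \<longleftrightarrow>
     (\<exists>A B. A \<inter> B = {} \<and> V = A \<union> B \<and> finite A \<and> finite B \<and> card A = m \<and> card B = n \<and>
            E = {{a, b} | a b. a \<in> A \<and> b \<in> B})"

end

theory Submission
  imports Defs
begin

definition eps :: "'a set \<Rightarrow> 'a set \<Rightarrow> int" where
  "eps Z Y = (-1) ^ card (Z \<inter> Y)"

lemma eps_comm: "eps Z Y = eps Y Z"
  unfolding eps_def by (simp add: Int_commute)

lemma sym_diff_comm: "sym_diff A B = sym_diff B A"
  unfolding sym_diff_def by blast

lemma eps_symdiff:
  assumes "finite Z" "finite W"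
  shows "eps (sym_diff Z W) Y = eps Z Y * eps W Y"
proof -
  define P where "P = Z \<inter> Y"
  define Q where "Q = W \<inter> Y"
  have fP: "finite P" "finite Q" using assms P_def Q_def by auto
  have e: "sym_diff Z W \<inter> Y = (P - Q) \<union> (Q - P)"
    unfolding sym_diff_def P_def Q_def by blast
  have c1: "card (sym_diff Z W \<inter> Y) = card (P - Q) + card (Q - P)"
    unfolding e by (rule card_Un_disjoint) (use fP in auto)
  have c2: "card P = card (P - Q) + card (P \<inter> Q)"
    using card_Diff_subset_Int[of P Q] card_mono[of P "P \<inter> Q"] fP by auto
  have c3: "card Q = card (Q - P) + card (P \<inter> Q)"
    using card_Diff_subset_Int[of Q P] card_mono[of Q "P \<inter> Q"] fP by (auto simp: Int_commute)
  have "eps Z Y * eps W Y = (-1::int) ^ (card (sym_diff Z W \<inter> Y) + 2 * card (P \<inter> Q))"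
    unfolding eps_def P_def[symmetric] Q_def[symmetric] power_add[symmetric]
    using c1 c2 c3 by (simp add: algebra_simps mult_2)
  also have "\<dots> = eps (sym_diff Z W) Y"
    unfolding eps_def power_add power_mult by simp
  finally show ?thesis by simp
qed

lemma sum_eps_zero:
  assumes "finite X" "Z \<subseteq> X" "Z \<noteq> {}"
  shows "(\<Sum>Y\<in>Pow X. eps Z Y) = 0"
proof -
  obtain z where z: "z \<in> Z" using assms by auto
  define X' where "X' = X - {z}"
  have X: "X = insert z X'" using z assms X'_def by auto
  have zX': "z \<notin> X'" using X'_def by auto
  have fX': "finite X'" using assms X'_def by auto
  have P: "Pow X = Pow X' \<union> insert z ` Pow X'" using X Pow_insert by metis
  have disj: "Pow X' \<inter> insert z ` Pow X' = {}" using zX' by auto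
  have inj: "inj_on (insert z) (Pow X')" unfolding inj_on_def using zX' by (metis PowD in_mono insert_ident)
  have "(\<Sum>Y\<in>Pow X. eps Z Y) = (\<Sum>Y\<in>Pow X'. eps Z Y) + (\<Sum>Y\<in>insert z ` Pow X'. eps Z Y)"
    unfolding P by (rule sum.union_disjoint) (use fX' disj in auto)
  also have "(\<Sum>Y\<in>insert z ` Pow X'. eps Z Y) = (\<Sum>Y\<in>Pow X'. eps Z (insert z Y))"
    using sum.reindex[OF inj] by simp
  also have "\<dots> = (\<Sum>Y\<in>Pow X'. - eps Z Y)"
  proof (rule sum.cong)
    fix Y assume "Y \<in> Pow X'"
    hence "z \<notin> Y" using zX' by auto
    moreover have "finite (Z \<inter> Y)" using \<open>Y \<in> Pow X'\<close> fX' finite_subset by blast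
    ultimately have "card (Z \<inter> insert z Y) = Suc (card (Z \<inter> Y))"
      using z by (simp add: Int_insert_right)
    thus "eps Z (insert z Y) = - eps Z Y" unfolding eps_def by simp
  qed simp
  finally show ?thesis by (simp add: sum_negf)
qed

theorem mainTheorem1:
  fixes V :: "'v set" and E :: "'v set set" and X :: "'a set" and f :: "'v \<Rightarrow> 'a set"
    and m n :: nat
  assumes "complete_bipartite V E m n" and "m \<ge> 1" and "n \<ge> 1"
    and "finite X" and "set_graceful V E X f"
  shows "m = 1 \<or> n = 1"
proof -
  obtain A B where AB: "A \<inter> B = {}" "V = A \<union> B" "finite A" "finite B" "card A = m" "card B = n"
    "E = {{a, b} | a b. a \<in> A \<and> b \<in> B}"
    using assms(1) unfolding complete_bipartite_def by blast
  have fX: "\<And>v. v \<in> V \<Longrightarrow> f v \<subseteq> X" and injf: "inj_on f V"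
    and injE: "inj_on (edge_label f) E" and imE: "edge_label f ` E = Pow X - {{}}"
    using assms(5) unfolding set_graceful_def by auto
  define F where "F = (\<lambda>p. sym_diff (f (fst p)) (f (snd p)))"
  have lab: "edge_label f {a, b} = sym_diff (f a) (f b)" for a b
    unfolding edge_label_def
  proof (rule the_equality)
    show "\<exists>x y. {a, b} = {x, y} \<and> sym_diff (f a) (f b) = sym_diff (f x) (f y)" by blast
  next
    fix S assume "\<exists>x y. {a, b} = {x, y} \<and> S = sym_diff (f x) (f y)"
    then obtain x y where "{a, b} = {x, y}" "S = sym_diff (f x) (f y)" by blast
    hence "(a = x \<and> b = y) \<or> (a = y \<and> b = x)" "S = sym_diff (f x) (f y)"
      by (simp_all only: doubleton_eq_iff)
    thus "S = sym_diff (f a) (f b)" using sym_diff_comm by metis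
  qed
  have b1: "bij_betw (\<lambda>p. {fst p, snd p}) (A \<times> B) E"
    unfolding bij_betw_def
  proof
    show "inj_on (\<lambda>p. {fst p, snd p}) (A \<times> B)"
      unfolding inj_on_def
    proof (intro ballI impI)
      fix p q assume pq: "p \<in> A \<times> B" "q \<in> A \<times> B" "{fst p, snd p} = {fst q, snd q}"
      hence "(fst p = fst q \<and> snd p = snd q) \<or> (fst p = snd q \<and> snd p = fst q)"
        by (simp only: doubleton_eq_iff)
      moreover have "fst p \<noteq> snd q" using pq(1,2) AB(1) by auto
      ultimately show "p = q" by (simp add: prod_eq_iff)
    qed
    show "(\<lambda>p. {fst p, snd p}) ` (A \<times> B) = E"
    proof
      show "(\<lambda>p. {fst p, snd p}) ` (A \<times> B) \<subseteq> E"
      proof (rule image_subsetI)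
        fix p assume "p \<in> A \<times> B"
        hence "fst p \<in> A" "snd p \<in> B" by auto
        thus "{fst p, snd p} \<in> E" unfolding AB(7) by (intro CollectI exI[of _ "fst p"] exI[of _ "snd p"]) simp
      qed
      show "E \<subseteq> (\<lambda>p. {fst p, snd p}) ` (A \<times> B)"
      proof
        fix e assume "e \<in> E"
        then obtain a b where "a \<in> A" "b \<in> B" "e = {a, b}" unfolding AB(7) by blast
        thus "e \<in> (\<lambda>p. {fst p, snd p}) ` (A \<times> B)" by (intro rev_image_eqI[of "(a,b)"]) auto
      qed
    qed
  qed
  have b2: "bij_betw (edge_label f) E (Pow X - {{}})"
    unfolding bij_betw_def using injE imE by blast
  have bij: "bij_betw F (A \<times> B) (Pow X - {{}})"
  proof -
    have "bij_betw (edge_label f \<circ> (\<lambda>p. {fst p, snd p})) (A \<times> B) (Pow X - {{}})"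
      by (rule bij_betw_trans[OF b1 b2])
    moreover have "edge_label f \<circ> (\<lambda>p. {fst p, snd p}) = F"
      unfolding F_def using lab by (intro ext) (simp only: comp_def)
    ultimately show ?thesis by simp
  qed
  have transfer: "(\<Sum>p\<in>A \<times> B. g (F p)) = (\<Sum>Z\<in>Pow X - {{}}. g Z)" for g :: "'a set \<Rightarrow> int"
    using sum.reindex_bij_betw[OF bij, of g] by simp
  define SA where "SA Y = (\<Sum>a\<in>A. eps (f a) Y)" for Y
  define SB where "SB Y = (\<Sum>b\<in>B. eps (f b) Y)" for Y
  define K where "K = card X"
  have finf: "\<And>v. v \<in> V \<Longrightarrow> finite (f v)" using fX assms(4) finite_subset by blast
  have prod: "SA Y * SB Y = (\<Sum>Z\<in>Pow X - {{}}. eps Z Y)" for Y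
  proof -
    have "SA Y * SB Y = (\<Sum>a\<in>A. \<Sum>b\<in>B. eps (f a) Y * eps (f b) Y)"
      unfolding SA_def SB_def by (rule sum_product)
    also have "\<dots> = (\<Sum>p\<in>A \<times> B. eps (f (fst p)) Y * eps (f (snd p)) Y)"
      by (simp add: sum.cartesian_product case_prod_beta)
    also have "\<dots> = (\<Sum>p\<in>A \<times> B. eps (F p) Y)"
    proof (rule sum.cong[OF refl])
      fix p assume "p \<in> A \<times> B"
      hence "fst p \<in> V" "snd p \<in> V" using AB(2) by auto
      thus "eps (f (fst p)) Y * eps (f (snd p)) Y = eps (F p) Y"
        unfolding F_def using eps_symdiff[of "f (fst p)" "f (snd p)" Y] finf by simp
    qed
    also have "\<dots> = (\<Sum>Z\<in>Pow X - {{}}. eps Z Y)" by (rule transfer)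
    finally show ?thesis .
  qed
  have sumZ: "(\<Sum>Z\<in>Pow X - {{}}. eps Z Y) = (\<Sum>Z\<in>Pow X. eps Z Y) - 1" for Y
    using sum_diff1[of "Pow X" "\<lambda>Z. eps Z Y" "{}"] assms(4) by (simp add: eps_def)
  have cardPow: "card (Pow X) = 2 ^ K" using assms(4) K_def card_Pow by blast
  have mn: "int m * int n = 2 ^ K - 1"
  proof -
    have "SA {} = int m" "SB {} = int n" unfolding SA_def SB_def eps_def using AB by auto
    moreover have "(\<Sum>Z\<in>Pow X. eps Z {}) = 2 ^ K" using cardPow by (simp add: eps_def)
    ultimately show ?thesis using prod[of "{}"] sumZ[of "{}"] by simp
  qed
  have sq1: "SA Y ^ 2 = 1" if "Y \<in> Pow X - {{}}" for Y
  proof -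
    have "(\<Sum>Z\<in>Pow X. eps Z Y) = 0"
      using sum_eps_zero[of X Y] that assms(4) eps_comm[of _ Y] by simp
    hence "SA Y * SB Y = -1" using prod sumZ by simp
    hence "\<bar>SA Y * SB Y\<bar> = 1" by simp
    hence "\<bar>SA Y\<bar> = 1" by (rule abs_zmult_eq_1)
    thus ?thesis by (metis power2_abs one_power2)
  qed
  have pars: "(\<Sum>Y\<in>Pow X. SA Y ^ 2) = int m * 2 ^ K"
  proof -
    have sqY: "SA Y ^ 2 = (\<Sum>a\<in>A. \<Sum>a'\<in>A. eps (sym_diff (f a) (f a')) Y)" for Y
    proof -
      have "SA Y ^ 2 = (\<Sum>a\<in>A. \<Sum>a'\<in>A. eps (f a) Y * eps (f a') Y)"
        unfolding SA_def power2_eq_square by (rule sum_product)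
      also have "\<dots> = (\<Sum>a\<in>A. \<Sum>a'\<in>A. eps (sym_diff (f a) (f a')) Y)"
      proof (rule sum.cong[OF refl], rule sum.cong[OF refl])
        fix a a' assume "a \<in> A" "a' \<in> A"
        thus "eps (f a) Y * eps (f a') Y = eps (sym_diff (f a) (f a')) Y"
          using eps_symdiff[of "f a" "f a'" Y] finf AB(2) by simp
      qed
      finally show ?thesis .
    qed
    have "(\<Sum>Y\<in>Pow X. SA Y ^ 2) = (\<Sum>Y\<in>Pow X. \<Sum>a\<in>A. \<Sum>a'\<in>A. eps (sym_diff (f a) (f a')) Y)"
      using sqY by simp
    also have "\<dots> = (\<Sum>a\<in>A. \<Sum>Y\<in>Pow X. \<Sum>a'\<in>A. eps (sym_diff (f a) (f a')) Y)"
      by (rule sum.swap)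
    also have "\<dots> = (\<Sum>a\<in>A. \<Sum>a'\<in>A. \<Sum>Y\<in>Pow X. eps (sym_diff (f a) (f a')) Y)"
      by (rule sum.cong[OF refl], rule sum.swap)
    also have "\<dots> = (\<Sum>a\<in>A. \<Sum>a'\<in>A. if a = a' then 2 ^ K else 0)"
    proof (rule sum.cong[OF refl], rule sum.cong[OF refl])
      fix a a' assume aa: "a \<in> A" "a' \<in> A"
      show "(\<Sum>Y\<in>Pow X. eps (sym_diff (f a) (f a')) Y) = (if a = a' then 2 ^ K else 0)"
      proof (cases "a = a'")
        case True
        thus ?thesis using cardPow by (simp add: sym_diff_def eps_def)
      next
        case False
        hence "f a \<noteq> f a'" using injf aa AB(2) unfolding inj_on_def by blast
        hence ne: "sym_diff (f a) (f a') \<noteq> {}" unfolding sym_diff_def by blast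
        have "sym_diff (f a) (f a') \<subseteq> X" using fX aa AB(2) unfolding sym_diff_def by blast
        thus ?thesis using sum_eps_zero[OF assms(4) _ ne] False by simp
      qed
    qed
    also have "\<dots> = int m * 2 ^ K" using AB(3,5) by simp
    finally show ?thesis .
  qed
  have "(\<Sum>Y\<in>Pow X. SA Y ^ 2) = SA {} ^ 2 + (\<Sum>Y\<in>Pow X - {{}}. SA Y ^ 2)"
    using sum.remove[of "Pow X" "{}" "\<lambda>Y. SA Y ^ 2"] assms(4) by simp
  also have "(\<Sum>Y\<in>Pow X - {{}}. SA Y ^ 2) = (\<Sum>Y\<in>Pow X - {{}}. 1)"
    using sq1 by (rule sum.cong[OF refl])
  also have "\<dots> = 2 ^ K - 1"
  proof -
    have c: "card (Pow X - {{}}) = card (Pow X) - 1"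
      by (rule card_Diff_singleton) auto
    have "(1::nat) \<le> 2 ^ K" by simp
    hence "int (2 ^ K - 1) = 2 ^ K - 1" by (simp add: of_nat_diff)
    thus ?thesis using c cardPow by simp
  qed
  also have "SA {} = int m" unfolding SA_def eps_def using AB by auto
  finally have eq: "int m ^ 2 + (2 ^ K - 1) = int m * 2 ^ K" using pars by simp
  have "int m * (int m + int n) = int m * (int m * int n + 1)"
    using eq mn by (simp add: algebra_simps power2_eq_square)
  hence "int m + int n = int m * int n + 1" using assms(2) by simp
  hence "(int m - 1) * (int n - 1) = 0" by (simp add: algebra_simps)
  thus ?thesis by simp
qed

end
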